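(* Let $X\in\mathbb{R}^{n\times d}$ with $n\ge2$, $y\in\mathbb{R}^n$, and let $g:\mathbb{R}^d\to(-\infty,\infty]$ be a proper lower semicontinuous convex function with $g(k\beta)=kg(\beta)$ for all $k\ge0$, $\beta\in\mathbb{R}^d$, such that there exists $\beta\in\mathrm{relint}(\mathrm{dom}(g))$ and $\frac12\|y-X\beta\|_2^2+g(\beta)$ attains its infimum. Let $D(\theta)=-\frac12\|\theta\|_2^2+y^\top\theta-g^\star(X^\top\theta)$. Let $\tilde\beta\in\mathbb{R}^d$ with $X\tilde\beta\ne0$ and $\tilde\theta\in\mathrm{dom}(D)$, and let \[ \mathcal{R}^{\mathrm{DS}}(\tilde\beta,\tilde\theta)=\Big\{\theta\ \Big|\ \Big\|\theta-\tfrac12(\tilde\theta+y)\Big\|_2^2\le\tfrac14\|\tilde\theta-y\|_2^2\ \land\ 0\le g(\tilde\beta)-\theta^\top X\tilde\beta\Big\}. \] Define \[ \alpha=\max\Big(0,\frac{1}{\|X\tilde\beta\|_2^2}\Big(\tfrac12(\tilde\theta+y)^\top X\tilde\beta-g(\tilde\beta)\Big)\Big),\quad \theta_c=\tfrac12(\tilde\theta+y)-\alpha X\tilde\beta,\quad r^2=\tfrac14\|\tilde\theta-y\|_2^2-\alpha^2\|X\tilde\beta\|_2^2. \] Then the minimum-radius Euclidean ball containing $\mathcal{R}^{\mathrm{DS}}(\tilde\beta,\tilde\theta)$ is $\mathcal{R}^{\mathrm{DE}}(\tilde\beta,\tilde\theta)=\{\theta\mid\|\theta-\theta_c\|_2^2\le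 r^2\}$.
   Context: $g^\star(v)=\sup_\beta v^\top\beta-g(\beta)$ is the Fenchel conjugate; $\mathrm{dom}(h)=\{z:|h(z)|<\infty\}$; $\mathrm{relint}$ is relative interior. *)

theory Defs
  imports "HOL-Analysis.Analysis" "HOL-Library.Extended_Real" "HOL-Library.Liminf_Limsup"
begin

definition proper_fun :: "('a \<Rightarrow> ereal) \<Rightarrow> bool" where
  "proper_fun g \<longleftrightarrow> (\<forall>x. g x \<noteq> -\<infinity>) \<and> (\<exists>x. g x \<noteq> \<infinity>)"

definition lsc_fun :: "('a::topological_space \<Rightarrow> ereal) \<Rightarrow> bool" where
  "lsc_fun g \<longleftrightarrow> (\<forall>x. g x \<le> Liminf (at x) g)"

definition convex_fun :: "('a::real_vector \<Rightarrow> ereal) \<Rightarrow> bool" where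
  "convex_fun g \<longleftrightarrow> convex {(x, t::real). g x \<le> ereal t}"

definition edom :: "('a \<Rightarrow> ereal) \<Rightarrow> 'a set" where
  "edom h = {z. \<bar>h z\<bar> < \<infinity>}"

definition fenchel_conj :: "('a::real_inner \<Rightarrow> ereal) \<Rightarrow> 'a \<Rightarrow> ereal" where
  "fenchel_conj g v = (SUP b. ereal (v \<bullet> b) - g b)"

definition dual_fun ::
  "real^'d^'n \<Rightarrow> real^'n \<Rightarrow> (real^'d \<Rightarrow> ereal) \<Rightarrow> real^'n \<Rightarrow> ereal" where
  "dual_fun X y g \<theta> =
     ereal (- (1/2) * (norm \<theta>)\<^sup>2 + y \<bullet> \<theta>) - fenchel_conj g (transpose X *v \<theta>)"

definition R_DS ::
  "real^'d^'n \<Rightarrow> real^'n \<Rightarrow> (real^'d \<Rightarrow> ereal) \<Rightarrow> real^'d \<Rightarrow> real^'n \<Rightarrow> (real^'n) set" where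
  "R_DS X y g bt tt = {\<theta>. (norm (\<theta> - (1/2) *\<^sub>R (tt + y)))\<^sup>2 \<le> (1/4) * (norm (tt - y))\<^sup>2
                          \<and> 0 \<le> g bt - ereal (\<theta> \<bullet> (X *v bt))}"

text \<open>alpha = max(0, (1/||X beta~||^2) (1/2 (theta~+y).X beta~ - g(beta~))), computed in the
  extended reals (it is -inf inside the max when g(beta~)=inf, giving alpha = 0).\<close>
definition alpha_DE ::
  "real^'d^'n \<Rightarrow> real^'n \<Rightarrow> (real^'d \<Rightarrow> ereal) \<Rightarrow> real^'d \<Rightarrow> real^'n \<Rightarrow> real" where
  "alpha_DE X y g bt tt = real_of_ereal (max 0
      (ereal (1 / (norm (X *v bt))\<^sup>2) * (ereal ((1/2) * ((tt + y) \<bullet> (X *v bt))) - g bt)))"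

definition center_DE ::
  "real^'d^'n \<Rightarrow> real^'n \<Rightarrow> (real^'d \<Rightarrow> ereal) \<Rightarrow> real^'d \<Rightarrow> real^'n \<Rightarrow> real^'n" where
  "center_DE X y g bt tt = (1/2) *\<^sub>R (tt + y) - alpha_DE X y g bt tt *\<^sub>R (X *v bt)"

definition radius2_DE ::
  "real^'d^'n \<Rightarrow> real^'n \<Rightarrow> (real^'d \<Rightarrow> ereal) \<Rightarrow> real^'d \<Rightarrow> real^'n \<Rightarrow> real" where
  "radius2_DE X y g bt tt = (1/4) * (norm (tt - y))\<^sup>2 - (alpha_DE X y g bt tt)\<^sup>2 * (norm (X *v bt))\<^sup>2"

definition is_min_ball :: "'a::real_normed_vector set \<Rightarrow> 'a \<Rightarrow> real \<Rightarrow> bool" where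
  "is_min_ball S c r2 \<longleftrightarrow>
     S \<subseteq> {\<theta>. (norm (\<theta> - c))\<^sup>2 \<le> r2} \<and>
     (\<forall>c' r2'. S \<subseteq> {\<theta>. (norm (\<theta> - c'))\<^sup>2 \<le> r2'} \<longrightarrow> r2 \<le> r2' \<and> (r2' = r2 \<longrightarrow> c' = c))"

end

theory Submission
  imports Defs
begin
lemma normsq_add: "(norm ((x::real^'n) + y))\<^sup>2 = (norm x)\<^sup>2 + 2 * (x \<bullet> y) + (norm y)\<^sup>2"
  by (simp add: power2_norm_eq_inner inner_add inner_commute)

lemma geo:
  fixes a c0 :: "real^'n" and S :: "(real^'n) set"
  assumes n2: "CARD('n) \<ge> 2" and al: "al \<ge> 0"
    and sub: "\<And>t. t \<in> S \<Longrightarrow> (norm (t - c0))\<^sup>2 \<le> R2 \<and> (al > 0 \<longrightarrow> t \<bullet> a \<le> c0 \<bullet> a - al * (norm a)\<^sup>2)"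
    and sup: "\<And>t. (norm (t - c0))\<^sup>2 \<le> R2 \<Longrightarrow> t \<bullet> a = c0 \<bullet> a - al * (norm a)\<^sup>2 \<Longrightarrow> t \<in> S"
    and ne: "t0 \<in> S"
  shows "S \<subseteq> {t. (norm (t - (c0 - al *\<^sub>R a)))\<^sup>2 \<le> R2 - al\<^sup>2 * (norm a)\<^sup>2} \<and>
     (\<forall>c' r2'. S \<subseteq> {t. (norm (t - c'))\<^sup>2 \<le> r2'} \<longrightarrow> R2 - al\<^sup>2 * (norm a)\<^sup>2 \<le> r2' \<and> (r2' = R2 - al\<^sup>2 * (norm a)\<^sup>2 \<longrightarrow> c' = c0 - al *\<^sub>R a))"
proof -
  define c where "c = c0 - al *\<^sub>R a"
  define r2 where "r2 = R2 - al\<^sup>2 * (norm a)\<^sup>2"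
  have cont: "(norm (t - c))\<^sup>2 \<le> r2" if "t \<in> S" for t
  proof -
    have e: "t - c = (t - c0) + al *\<^sub>R a" by (simp add: c_def)
    have n: "(norm (t - c))\<^sup>2 = (norm (t - c0))\<^sup>2 + 2 * al * ((t - c0) \<bullet> a) + al\<^sup>2 * (norm a)\<^sup>2"
      unfolding e normsq_add by (simp add: power_mult_distrib)
    have h: "al * ((t - c0) \<bullet> a) + al\<^sup>2 * (norm a)\<^sup>2 \<le> 0"
    proof (cases "al > 0")
      case True
      then have "t \<bullet> a \<le> c0 \<bullet> a - al * (norm a)\<^sup>2" using sub[OF that] by blast
      then have "(t - c0) \<bullet> a + al * (norm a)\<^sup>2 \<le> 0" by (simp add: inner_diff_left)
      from mult_left_mono[OF this, of al] True show ?thesis by (simp add: algebra_simps power2_eq_square)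
    next
      case False then show ?thesis using al by simp
    qed
    show ?thesis using n h sub[OF that] unfolding r2_def by linarith
  qed
  have r2nn: "0 \<le> r2" using cont[OF ne] by (smt (verit) zero_le_power2)
  obtain u where u: "norm u = 1" "u \<bullet> a = 0"
  proof -
    have d: "dim {a} \<le> 1" using dim_le_card[of "{a}" "{a}"] by simp
    have "span {a} \<noteq> UNIV"
    proof
      assume "span {a} = UNIV"
      then have "dim (UNIV::(real^'n) set) = dim {a}" by (metis dim_span)
      moreover have "dim (UNIV::(real^'n) set) = CARD('n)" by simp
      ultimately show False using d n2 by simp
    qed
    then obtain v where v: "v \<noteq> 0" "\<forall>x\<in>span {a}. v \<bullet> x = 0" using span_not_UNIV_orthogonal by blast
    have "v \<bullet> a = 0" using v span_base by blast
    then show ?thesis using v that[of "v /\<^sub>R norm v"] by auto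
  qed
  define \<rho> where "\<rho> = sqrt r2"
  have rho2: "\<rho>\<^sup>2 = r2" using r2nn by (simp add: \<rho>_def)
  have inS: "c + s *\<^sub>R (\<rho> *\<^sub>R u) \<in> S" if s: "s = 1 \<or> s = -1" for s
  proof (rule sup)
    have e: "c + s *\<^sub>R (\<rho> *\<^sub>R u) - c0 = (s * \<rho>) *\<^sub>R u + (- al) *\<^sub>R a" by (simp add: c_def algebra_simps)
    have ss: "s\<^sup>2 = 1" using s by auto
    show "(norm (c + s *\<^sub>R (\<rho> *\<^sub>R u) - c0))\<^sup>2 \<le> R2"
      unfolding e normsq_add using u ss rho2 by (simp add: power_mult_distrib r2_def)
    show "(c + s *\<^sub>R (\<rho> *\<^sub>R u)) \<bullet> a = c0 \<bullet> a - al * (norm a)\<^sup>2"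
      using u by (simp add: c_def inner_add_left inner_diff_left power2_norm_eq_inner)
  qed
  show ?thesis unfolding c_def[symmetric] r2_def[symmetric]
  proof (intro conjI allI impI)
    show "S \<subseteq> {t. (norm (t - c))\<^sup>2 \<le> r2}" using cont by blast
    fix c' r2' assume H: "S \<subseteq> {t. (norm (t - c'))\<^sup>2 \<le> r2'}"
    have p1: "(norm ((c - c') + \<rho> *\<^sub>R u))\<^sup>2 \<le> r2'" using H inS[of 1] by (auto simp: algebra_simps)
    have p2: "(norm ((c - c') + (-\<rho>) *\<^sub>R u))\<^sup>2 \<le> r2'" using H inS[of "-1"] by (auto simp: algebra_simps)
    have key: "(norm (c - c'))\<^sup>2 + r2 \<le> r2'"
      using p1 p2 u rho2 unfolding normsq_add by (simp add: power_mult_distrib)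
    then show "r2 \<le> r2'" by (smt (verit) zero_le_power2)
    assume "r2' = r2"
    then show "c' = c" using key by simp
  qed
qed

theorem theorem11:
  fixes X :: "real^'d^'n" and y :: "real^'n" and g :: "real^'d \<Rightarrow> ereal"
    and bt :: "real^'d" and tt :: "real^'n"
  assumes n2: "CARD('n) \<ge> 2"
    and proper: "proper_fun g" and lsc: "lsc_fun g" and cvx: "convex_fun g"
    and homog: "\<And>k b. k \<ge> 0 \<Longrightarrow> g (k *\<^sub>R b) = ereal k * g b"
    and relint: "\<exists>b. b \<in> rel_interior (edom g)"
    and attains: "\<exists>b0. \<forall>b. ereal ((1/2) * (norm (y - X *v b0))\<^sup>2) + g b0
                              \<le> ereal ((1/2) * (norm (y - X *v b))\<^sup>2) + g b"
    and Xbt: "X *v bt \<noteq> 0"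
    and tt_dom: "tt \<in> edom (dual_fun X y g)"
  shows "is_min_ball (R_DS X y g bt tt) (center_DE X y g bt tt) (radius2_DE X y g bt tt)"
proof -
  define a where "a = X *v bt"
  define c0 where "c0 = (1/2) *\<^sub>R (tt + y)"
  define R2 where "R2 = (1/4) * (norm (tt - y))\<^sup>2"
  define al where "al = alpha_DE X y g bt tt"
  define v where "v = transpose X *v tt"
  have vb: "v \<bullet> b = tt \<bullet> (X *v b)" for b unfolding v_def by (simp add: dot_lmul_matrix)
  have gnm: "g b \<noteq> -\<infinity>" for b using proper unfolding proper_fun_def by blast
  define F where "F = fenchel_conj g v"
  have Ffin: "\<bar>F\<bar> \<noteq> \<infinity>"
  proof
    assume "\<bar>F\<bar> = \<infinity>"
    then have "F = \<infinity> \<or> F = -\<infinity>" by auto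
    then have "\<bar>dual_fun X y g tt\<bar> = \<infinity>" unfolding dual_fun_def F_def v_def by auto
    then show False using tt_dom unfolding edom_def by auto
  qed
  have feas: "ereal (tt \<bullet> a) \<le> g bt"
  proof (rule ccontr)
    assume "\<not> ereal (tt \<bullet> a) \<le> g bt"
    then have lt: "g bt < ereal (tt \<bullet> a)" by simp
    then obtain \<gamma> where \<gamma>: "g bt = ereal \<gamma>" using gnm[of bt] by (cases "g bt") auto
    define \<delta> where "\<delta> = tt \<bullet> a - \<gamma>"
    have dpos: "\<delta> > 0" using lt \<gamma> \<delta>_def by simp
    obtain r where r: "F = ereal r" using Ffin by (cases F) auto
    define k where "k = (\<bar>r\<bar> + 1) / \<delta>"
    have k0: "k \<ge> 0" using dpos by (simp add: k_def)
    have "ereal (v \<bullet> (k *\<^sub>R bt)) - g (k *\<^sub>R bt) \<le> F"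
      unfolding F_def fenchel_conj_def by (rule SUP_upper) simp
    moreover have "ereal (v \<bullet> (k *\<^sub>R bt)) - g (k *\<^sub>R bt) = ereal (k * \<delta>)"
      using homog[OF k0, of bt] \<gamma> vb[of bt] by (simp add: a_def \<delta>_def algebra_simps)
    moreover have "k * \<delta> = \<bar>r\<bar> + 1" using dpos by (simp add: k_def)
    ultimately show False using r by simp
  qed
  have alc: "(g bt = \<infinity> \<and> al = 0) \<or> (\<exists>\<gamma>. g bt = ereal \<gamma> \<and> al = max 0 ((c0 \<bullet> a - \<gamma>) / (norm a)\<^sup>2))"
  proof (cases "g bt")
    case (real \<gamma>)
    have q: "(1/2) * ((tt + y) \<bullet> a) = c0 \<bullet> a" by (simp add: c0_def)
    have "al = max 0 ((c0 \<bullet> a - \<gamma>) / (norm a)\<^sup>2)"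
      unfolding al_def alpha_DE_def a_def[symmetric] real q by (simp add: max_def divide_simps)
    then show ?thesis using real by blast
  next
    case PInf
    have "al = 0" using Xbt unfolding al_def alpha_DE_def a_def[symmetric] PInf by simp
    then show ?thesis using PInf by blast
  next
    case MInf then show ?thesis using gnm by blast
  qed
  have al0: "al \<ge> 0" using alc by auto
  have anz: "(norm a)\<^sup>2 > 0" using Xbt a_def by simp
  have memb: "t \<in> R_DS X y g bt tt \<longleftrightarrow> (norm (t - c0))\<^sup>2 \<le> R2 \<and> ereal (t \<bullet> a) \<le> g bt" for t
    unfolding R_DS_def c0_def R2_def a_def[symmetric] using gnm[of bt]
    by (cases "g bt") auto
  have G: "R_DS X y g bt tt \<subseteq> {t. (norm (t - (c0 - al *\<^sub>R a)))\<^sup>2 \<le> R2 - al\<^sup>2 * (norm a)\<^sup>2} \<and>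
     (\<forall>c' r2'. R_DS X y g bt tt \<subseteq> {t. (norm (t - c'))\<^sup>2 \<le> r2'} \<longrightarrow> R2 - al\<^sup>2 * (norm a)\<^sup>2 \<le> r2' \<and> (r2' = R2 - al\<^sup>2 * (norm a)\<^sup>2 \<longrightarrow> c' = c0 - al *\<^sub>R a))"
  proof (rule geo[OF n2 al0])
    fix t assume "t \<in> R_DS X y g bt tt"
    then have t: "(norm (t - c0))\<^sup>2 \<le> R2" "ereal (t \<bullet> a) \<le> g bt" using memb by auto
    show "(norm (t - c0))\<^sup>2 \<le> R2 \<and> (al > 0 \<longrightarrow> t \<bullet> a \<le> c0 \<bullet> a - al * (norm a)\<^sup>2)"
    proof (intro conjI impI)
      show "(norm (t - c0))\<^sup>2 \<le> R2" by (rule t(1))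
      assume "al > 0"
      then obtain \<gamma> where g: "g bt = ereal \<gamma>" and "al = (c0 \<bullet> a - \<gamma>) / (norm a)\<^sup>2" using alc by auto
      then have "c0 \<bullet> a - al * (norm a)\<^sup>2 = \<gamma>" using anz by simp
      then show "t \<bullet> a \<le> c0 \<bullet> a - al * (norm a)\<^sup>2" using t(2) g by simp
    qed
  next
    fix t assume t: "(norm (t - c0))\<^sup>2 \<le> R2" "t \<bullet> a = c0 \<bullet> a - al * (norm a)\<^sup>2"
    have "ereal (t \<bullet> a) \<le> g bt"
      using alc
    proof (elim disjE exE conjE)
      assume "g bt = \<infinity>" then show ?thesis by simp
    next
      fix \<gamma> assume g: "g bt = ereal \<gamma>" and a1: "al = max 0 ((c0 \<bullet> a - \<gamma>) / (norm a)\<^sup>2)"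
      show ?thesis
      proof (cases "(c0 \<bullet> a - \<gamma>) / (norm a)\<^sup>2 \<le> 0")
        case True
        then have "c0 \<bullet> a \<le> \<gamma>" using anz by (simp add: divide_le_0_iff)
        then show ?thesis using True a1 t(2) g by simp
      next
        case False
        then have "al = (c0 \<bullet> a - \<gamma>) / (norm a)\<^sup>2" using a1 by simp
        then show ?thesis using t(2) g anz by simp
      qed
    qed
    then show "t \<in> R_DS X y g bt tt" using memb t(1) by blast
  next
    have "tt - c0 = (1/2) *\<^sub>R (tt - y)" by (simp add: c0_def vec_eq_iff field_simps)
    then have "(norm (tt - c0))\<^sup>2 = R2" by (simp add: R2_def power_mult_distrib power2_eq_square)
    then show "tt \<in> R_DS X y g bt tt" using memb feas by simp
  qed
  have "center_DE X y g bt tt = c0 - al *\<^sub>R a" unfolding center_DE_def c0_def al_def a_def ..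
  moreover have "radius2_DE X y g bt tt = R2 - al\<^sup>2 * (norm a)\<^sup>2" unfolding radius2_DE_def R2_def al_def a_def ..
  ultimately show ?thesis using G unfolding is_min_ball_def by simp
qed
end
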